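(* Let $\sigma$ be a nonnegative finite measure on $\mathbb{R}^2$ which is upper $\alpha$-Ahlfors regular for some $\alpha>1$ and constants $M,r_*>0$, with $\sigma(\mathbb{R}^2)=\Phi\le Mr_*^\alpha$. Then $$\|\sigma\|^2_{H^{-1/2}(\mathbb{R}^2)}\lesssim_\alpha M^{1/\alpha}\Phi^{2-1/\alpha}.$$
   Context: For $\alpha\in[0,2]$, a nonnegative finite measure $\sigma$ on $\mathbb{R}^2$ is upper $\alpha$-Ahlfors regular with constants $M,r_*>0$ if $\sigma(B(x,r))\le Mr^\alpha$ for all $x\in\operatorname{supp}\sigma$ and all $r\in(0,r_*]$. $\|\sigma\|^2_{H^{-1/2}(\mathbb{R}^2)}=\int\int|x-y|^{-1}d\sigma(x)d\sigma(y)$. $A\lesssim_\alpha B$ means $A\le CB$ with $C$ depending only on $\alpha$. *)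

theory Defs
  imports "HOL-Analysis.Analysis" "HOL-Probability.Probability"
begin

definition msupp :: "(real^2) measure \<Rightarrow> (real^2) set" where
  "msupp \<sigma> = {x. \<forall>r>0. emeasure \<sigma> (ball x r) > 0}"

definition upper_ahlfors_regular ::
  "real \<Rightarrow> real \<Rightarrow> real \<Rightarrow> (real^2) measure \<Rightarrow> bool" where
  "upper_ahlfors_regular \<alpha> M rs \<sigma> \<longleftrightarrow>
     (\<forall>x\<in>msupp \<sigma>. \<forall>r. 0 < r \<and> r \<le> rs \<longrightarrow> measure \<sigma> (ball x r) \<le> M * r powr \<alpha>)"

definition riesz_kernel :: "real^2 \<Rightarrow> real^2 \<Rightarrow> ennreal" where
  "riesz_kernel x y = (if x = y then \<infinity> else ennreal (1 / dist x y))"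

text \<open>The squared H^{-1/2}(R^2) norm: double integral of |x-y|^{-1} (possibly infinite).\<close>
definition Hm12_norm_sq :: "(real^2) measure \<Rightarrow> ennreal" where
  "Hm12_norm_sq \<sigma> = (\<integral>\<^sup>+ x. (\<integral>\<^sup>+ y. riesz_kernel x y \<partial>\<sigma>) \<partial>\<sigma>)"

end

theory Submission
  imports Defs
begin

lemma arith_id:
  fixes \<alpha> M P t0 :: real
  assumes a: "\<alpha> > 1" and M: "M > 0" and P: "P > 0" and t0: "t0 = (M/P) powr (1/\<alpha>)"
  shows "P * t0 + M * (t0 powr (1 - \<alpha>) / (\<alpha> - 1)) = \<alpha> / (\<alpha> - 1) * M powr (1/\<alpha>) * P powr (1 - 1/\<alpha>)"
proof -
  have h1: "P * t0 = M powr (1/\<alpha>) * P powr (1 - 1/\<alpha>)"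
  proof -
    have d: "(M/P) powr (1/\<alpha>) = M powr (1/\<alpha>) / P powr (1/\<alpha>)"
      by (rule powr_divide)
    have "P * t0 = P * (M powr (1/\<alpha>) / P powr (1/\<alpha>))" by (simp only: t0 d)
    also have "\<dots> = P powr 1 * (M powr (1/\<alpha>) * P powr (- (1/\<alpha>)))"
      using P by (simp add: powr_minus divide_inverse)
    also have "\<dots> = M powr (1/\<alpha>) * (P powr 1 * P powr (- (1/\<alpha>)))" by simp
    also have "P powr 1 * P powr (- (1/\<alpha>)) = P powr (1 - 1/\<alpha>)"
      using powr_add[of P 1 "-(1/\<alpha>)"] by simp
    finally show ?thesis .
  qed
  have h2: "M * t0 powr (1 - \<alpha>) = M powr (1/\<alpha>) * P powr (1 - 1/\<alpha>)"
  proof -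
    have e: "1/\<alpha> * (1 - \<alpha>) = 1/\<alpha> - 1" using a by (simp add: field_simps)
    have d: "(M/P) powr (1/\<alpha> - 1) = M powr (1/\<alpha> - 1) / P powr (1/\<alpha> - 1)"
      by (rule powr_divide)
    have "t0 powr (1 - \<alpha>) = (M/P) powr (1/\<alpha> - 1)"
      unfolding t0 powr_powr e ..
    also have "\<dots> = M powr (1/\<alpha> - 1) * P powr (-(1/\<alpha> - 1))"
      by (metis d powr_minus divide_inverse)
    finally have "M * t0 powr (1 - \<alpha>) = (M powr 1 * M powr (1/\<alpha> - 1)) * P powr (1 - 1/\<alpha>)"
      using M by simp
    also have "M powr 1 * M powr (1/\<alpha> - 1) = M powr (1/\<alpha>)"
      using powr_add[of M 1 "1/\<alpha> - 1"] by simp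
    finally show ?thesis .
  qed
  have "P * t0 + M * (t0 powr (1 - \<alpha>) / (\<alpha> - 1)) = P * t0 + (M * t0 powr (1 - \<alpha>)) / (\<alpha> - 1)" by simp
  also have "\<dots> = M powr (1/\<alpha>) * P powr (1 - 1/\<alpha>) * (1 + 1 / (\<alpha> - 1))"
    unfolding h1 h2 by (simp add: field_simps)
  also have "1 + 1 / (\<alpha> - 1) = \<alpha> / (\<alpha> - 1)" using a by (simp add: field_simps)
  finally show ?thesis by simp
qed

lemma supp_AE:
  fixes \<sigma> :: "(real^2) measure"
  assumes sets: "sets \<sigma> = sets borel"
  shows "AE x in \<sigma>. x \<in> msupp \<sigma>"
proof -
  define F where "F = {ball x r | x r. r > 0 \<and> emeasure \<sigma> (ball x r) = 0}"
  have opn: "\<And>S. S \<in> F \<Longrightarrow> open S" unfolding F_def by auto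
  obtain F' where F': "F' \<subseteq> F" "countable F'" "\<Union>F' = \<Union>F" by (rule Lindelof[OF opn])
  have "(\<Union>S\<in>F'. S) \<in> null_sets \<sigma>"
  proof (rule null_sets_UN'[OF F'(2)])
    fix S assume "S \<in> F'"
    then have "S \<in> F" using F'(1) by blast
    then obtain x r where S: "S = ball x r" "emeasure \<sigma> (ball x r) = 0" unfolding F_def by blast
    have "ball x r \<in> sets \<sigma>" using sets by simp
    then show "S \<in> null_sets \<sigma>" using S by (simp add: null_sets_def)
  qed
  then have N: "\<Union>F' \<in> null_sets \<sigma>" by simp
  have sub: "{x \<in> space \<sigma>. x \<notin> msupp \<sigma>} \<subseteq> \<Union>F'"
  proof
    fix x assume "x \<in> {x \<in> space \<sigma>. x \<notin> msupp \<sigma>}"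
    then obtain r where r: "r > 0" "\<not> emeasure \<sigma> (ball x r) > 0" unfolding msupp_def by blast
    then have "emeasure \<sigma> (ball x r) = 0" by (simp add: not_less)
    then have "ball x r \<in> F" unfolding F_def using r(1) by blast
    moreover have "x \<in> ball x r" using r(1) by simp
    ultimately have "x \<in> \<Union>F" by blast
    then show "x \<in> \<Union>F'" using F'(3) by simp
  qed
  show ?thesis by (rule AE_I'[OF N sub])
qed

lemma tail_integral:
  fixes \<alpha> t0 M P :: real
  assumes "\<alpha> > 1" "t0 > 0" "M \<ge> 0" "P \<ge> 0"
  shows "(\<integral>\<^sup>+ t. ennreal (P * indicator {0..t0} t + M * (indicator {t0..} t * t powr (-\<alpha>))) \<partial>lborel)
     = ennreal (P * t0 + M * (t0 powr (1 - \<alpha>) / (\<alpha> - 1)))"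
proof -
  have hi: "((\<lambda>t. indicator {t0..} t * t powr (-\<alpha>)) has_integral (t0 powr (1 - \<alpha>) / (\<alpha> - 1))) UNIV"
  proof -
    have "((\<lambda>x. x powr (-\<alpha>)) has_integral -(t0 powr (-\<alpha>+1)) / (-\<alpha>+1)) {t0..}"
      by (rule has_integral_powr_to_inf) (use assms in auto)
    moreover have "-(t0 powr (-\<alpha>+1)) / (-\<alpha>+1) = t0 powr (1 - \<alpha>) / (\<alpha> - 1)"
      using assms by (simp add: field_simps)
    ultimately have "((\<lambda>x. x powr (-\<alpha>)) has_integral t0 powr (1 - \<alpha>) / (\<alpha> - 1)) {t0..}" by simp
    then have "((\<lambda>x. if x \<in> {t0..} then x powr (-\<alpha>) else 0) has_integral t0 powr (1 - \<alpha>) / (\<alpha> - 1)) UNIV"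
      by (simp only: has_integral_restrict_UNIV)
    moreover have "(\<lambda>t. indicator {t0..} t * t powr (-\<alpha>)) = (\<lambda>x. if x \<in> {t0..} then x powr (-\<alpha>) else (0::real))"
      by (auto simp: indicator_def fun_eq_iff)
    ultimately show ?thesis by simp
  qed
  have n2: "(\<integral>\<^sup>+ t. ennreal (indicator {t0..} t * t powr (-\<alpha>)) \<partial>lborel) = ennreal (t0 powr (1 - \<alpha>) / (\<alpha> - 1))"
    by (rule nn_integral_has_integral_lborel[OF _ _ hi]) (auto simp: indicator_def)
  have "(\<integral>\<^sup>+ t. ennreal (P * indicator {0..t0} t + M * (indicator {t0..} t * t powr (-\<alpha>))) \<partial>lborel)
      = (\<integral>\<^sup>+ t. ennreal P * indicator {0..t0} t + ennreal M * ennreal (indicator {t0..} t * t powr (-\<alpha>)) \<partial>lborel)"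
    using assms by (intro nn_integral_cong) (auto simp: indicator_def ennreal_plus ennreal_mult)
  also have "\<dots> = (\<integral>\<^sup>+ t. ennreal P * indicator {0..t0} t \<partial>lborel) + (\<integral>\<^sup>+ t. ennreal M * ennreal (indicator {t0..} t * t powr (-\<alpha>)) \<partial>lborel)"
    by (rule nn_integral_add) auto
  also have "\<dots> = ennreal P * ennreal t0 + ennreal M * ennreal (t0 powr (1 - \<alpha>) / (\<alpha> - 1))"
    using assms by (simp add: nn_integral_cmult n2)
  also have "\<dots> = ennreal (P * t0) + ennreal (M * (t0 powr (1 - \<alpha>) / (\<alpha> - 1)))"
  proof -
    have nn: "0 \<le> t0 powr (1 - \<alpha>) / (\<alpha> - 1)" using assms by auto
    have e1: "ennreal (P*t0) = ennreal P * ennreal t0" using assms by (simp add: ennreal_mult)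
    have e2: "ennreal (M * (t0 powr (1 - \<alpha>) / (\<alpha> - 1))) = ennreal M * ennreal (t0 powr (1 - \<alpha>) / (\<alpha> - 1))"
      by (rule ennreal_mult) (use assms nn in auto)
    show ?thesis by (simp only: e1 e2)
  qed
  also have "\<dots> = ennreal (P * t0 + M * (t0 powr (1 - \<alpha>) / (\<alpha> - 1)))"
    by (rule ennreal_plus[symmetric]) (use assms in auto)
  finally show ?thesis .
qed

lemma lborel_Ioi_inf: "emeasure lborel {0::real<..} = \<infinity>"
proof (rule ccontr)
  assume "emeasure lborel {0::real<..} \<noteq> \<infinity>"
  then obtain r where r: "emeasure lborel {0::real<..} = ennreal r" "r \<ge> 0"
    by (cases "emeasure lborel {0::real<..}") auto
  have "emeasure lborel {0::real<..<r+1} \<le> emeasure lborel {0::real<..}"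
    by (rule emeasure_mono) auto
  then have "ennreal (r+1) \<le> ennreal r" using r by simp
  then show False using r by simp
qed

lemma kernel_repr:
  fixes x y :: "real^2"
  shows "riesz_kernel x y = (\<integral>\<^sup>+ t. indicator ({0<..} \<inter> {t. t * dist x y < 1}) t \<partial>lborel)"
proof (cases "x = y")
  case True
  then have "{0<..} \<inter> {t::real. t * dist x y < 1} = {0<..}" by auto
  then show ?thesis using True by (simp add: riesz_kernel_def lborel_Ioi_inf)
next
  case False
  then have d: "dist x y > 0" by simp
  then have "{0<..} \<inter> {t::real. t * dist x y < 1} = {0<..<1 / dist x y}"
    by (auto simp: field_simps)
  then show ?thesis using False d by (simp add: riesz_kernel_def)
qed

lemma inner_swap:
  fixes \<sigma> :: "(real^2) measure" and x :: "real^2"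
  assumes sets: "sets \<sigma> = sets borel" and fin: "finite_measure \<sigma>"
  shows "(\<integral>\<^sup>+ y. riesz_kernel x y \<partial>\<sigma>)
     = (\<integral>\<^sup>+ t. (\<integral>\<^sup>+ y. indicator ({0<..} \<inter> {t. t * dist x y < 1}) t \<partial>\<sigma>) \<partial>lborel)"
proof -
  interpret pair_sigma_finite \<sigma> lborel
    using fin by (simp add: pair_sigma_finite_def finite_measure_def lborel.sigma_finite_measure_axioms)
  have meas: "(\<lambda>(y, t). indicator ({0<..} \<inter> {t::real. t * dist x y < 1}) t :: ennreal) \<in> borel_measurable (\<sigma> \<Otimes>\<^sub>M lborel)"
  proof -
    have "(\<lambda>(y, t). indicator ({0<..} \<inter> {t::real. t * dist x y < 1}) t :: ennreal)
        = (\<lambda>p. if 0 < snd p \<and> snd p * dist x (fst p) < 1 then 1 else 0)"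
      by (auto simp: fun_eq_iff indicator_def)
    moreover have "(\<lambda>p. if 0 < snd p \<and> snd p * dist x (fst p) < 1 then 1 else 0 :: ennreal) \<in> borel_measurable (borel \<Otimes>\<^sub>M lborel)"
      by measurable
    moreover have "sets (\<sigma> \<Otimes>\<^sub>M lborel) = sets (borel \<Otimes>\<^sub>M lborel)"
      by (rule sets_pair_measure_cong) (use sets in auto)
    ultimately show ?thesis using measurable_cong_sets by (metis (no_types, lifting))
  qed
  have "(\<integral>\<^sup>+ y. riesz_kernel x y \<partial>\<sigma>) = (\<integral>\<^sup>+ y. (\<integral>\<^sup>+ t. indicator ({0<..} \<inter> {t. t * dist x y < 1}) t \<partial>lborel) \<partial>\<sigma>)"
    by (simp add: kernel_repr)
  also have "\<dots> = (\<integral>\<^sup>+ t. (\<integral>\<^sup>+ y. indicator ({0<..} \<inter> {t. t * dist x y < 1}) t \<partial>\<sigma>) \<partial>lborel)"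
    using Fubini'[of "\<lambda>y t. indicator ({0<..} \<inter> {t::real. t * dist x y < 1}) t", OF meas] by simp
  finally show ?thesis .
qed

lemma inner_bound:
  fixes \<sigma> :: "(real^2) measure" and x :: "real^2"
  assumes sets: "sets \<sigma> = sets borel" and fin: "finite_measure \<sigma>"
    and a: "\<alpha> > 1" and M: "M > 0" and ahl: "upper_ahlfors_regular \<alpha> M rs \<sigma>"
    and xs: "x \<in> msupp \<sigma>" and t0: "t0 > 0" "1 / t0 \<le> rs"
  shows "(\<integral>\<^sup>+ y. riesz_kernel x y \<partial>\<sigma>) \<le> ennreal (measure \<sigma> UNIV * t0 + M * (t0 powr (1 - \<alpha>) / (\<alpha> - 1)))"
proof -
  interpret finite_measure \<sigma> by (rule fin)
  define P where "P = measure \<sigma> UNIV"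
  have P0: "P \<ge> 0" unfolding P_def by simp
  have sp: "space \<sigma> = UNIV" using sets_eq_imp_space_eq[OF sets] by simp
  have pw: "(\<integral>\<^sup>+ y. indicator ({0<..} \<inter> {t. t * dist x y < 1}) t \<partial>\<sigma>)
      \<le> ennreal (P * indicator {0..t0} t + M * (indicator {t0..} t * t powr (-\<alpha>)))" for t :: real
  proof (cases "t > 0")
    case False
    then show ?thesis by (simp add: indicator_def)
  next
    case True
    have bs: "ball x (1/t) \<in> sets \<sigma>" using sets by simp
    have "(\<integral>\<^sup>+ y. indicator ({0<..} \<inter> {t. t * dist x y < 1}) t \<partial>\<sigma>) = (\<integral>\<^sup>+ y. indicator (ball x (1/t)) y \<partial>\<sigma>)"
      using True by (intro nn_integral_cong) (auto simp: indicator_def field_simps mem_ball)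
    also have "\<dots> = ennreal (measure \<sigma> (ball x (1/t)))"
      using bs by (simp add: emeasure_eq_measure)
    also have "\<dots> \<le> ennreal (P * indicator {0..t0} t + M * (indicator {t0..} t * t powr (-\<alpha>)))"
    proof (cases "t \<le> t0")
      case True
      have "measure \<sigma> (ball x (1/t)) \<le> P" unfolding P_def
        by (rule finite_measure_mono) (simp_all add: sets)
      moreover have "0 \<le> M * (indicator {t0..} t * t powr (-\<alpha>))" using M by (auto simp: indicator_def)
      ultimately have "measure \<sigma> (ball x (1/t)) \<le> P * indicator {0..t0} t + M * (indicator {t0..} t * t powr (-\<alpha>))"
        using True \<open>t > 0\<close> by (simp add: indicator_def)
      then show ?thesis by (rule ennreal_leI)
    next
      case False
      have "1/t \<le> 1/t0" using False t0 by (auto simp: field_simps)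
      then have "1/t \<le> rs" using t0 by linarith
      then have "measure \<sigma> (ball x (1/t)) \<le> M * (1/t) powr \<alpha>"
        using ahl xs \<open>t > 0\<close> unfolding upper_ahlfors_regular_def by auto
      also have "M * (1/t) powr \<alpha> = M * t powr (-\<alpha>)"
        using \<open>t > 0\<close> by (simp add: powr_divide powr_minus_divide)
      finally have "measure \<sigma> (ball x (1/t)) \<le> P * indicator {0..t0} t + M * (indicator {t0..} t * t powr (-\<alpha>))"
        using False P0 by (simp add: indicator_def)
      then show ?thesis by (rule ennreal_leI)
    qed
    finally show ?thesis .
  qed
  have "(\<integral>\<^sup>+ y. riesz_kernel x y \<partial>\<sigma>)
     = (\<integral>\<^sup>+ t. (\<integral>\<^sup>+ y. indicator ({0<..} \<inter> {t. t * dist x y < 1}) t \<partial>\<sigma>) \<partial>lborel)"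
    by (rule inner_swap[OF sets fin])
  also have "\<dots> \<le> (\<integral>\<^sup>+ t. ennreal (P * indicator {0..t0} t + M * (indicator {t0..} t * t powr (-\<alpha>))) \<partial>lborel)"
    by (rule nn_integral_mono) (rule pw)
  also have "\<dots> = ennreal (P * t0 + M * (t0 powr (1 - \<alpha>) / (\<alpha> - 1)))"
    by (rule tail_integral) (use a t0 M P0 in auto)
  finally show ?thesis unfolding P_def .
qed


theorem proposition4p7:
  fixes \<alpha> :: real
  assumes "\<alpha> > 1"
  shows "\<exists>C>0. \<forall>(\<sigma>::(real^2) measure) M rs.
           sets \<sigma> = sets borel \<longrightarrow> finite_measure \<sigma> \<longrightarrow>
           M > 0 \<longrightarrow> rs > 0 \<longrightarrow>
           upper_ahlfors_regular \<alpha> M rs \<sigma> \<longrightarrow>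
           measure \<sigma> UNIV \<le> M * rs powr \<alpha> \<longrightarrow>
           Hm12_norm_sq \<sigma> \<le> ennreal (C * M powr (1 / \<alpha>) * measure \<sigma> UNIV powr (2 - 1 / \<alpha>))"
proof (intro exI[of _ "\<alpha> / (\<alpha> - 1)"] conjI allI impI)
  show "\<alpha> / (\<alpha> - 1) > 0" using assms by auto
  fix \<sigma> :: "(real^2) measure" and M rs :: real
  assume sets: "sets \<sigma> = sets borel" and fin: "finite_measure \<sigma>" and M: "M > 0" and rs: "rs > 0"
    and ahl: "upper_ahlfors_regular \<alpha> M rs \<sigma>" and bd: "measure \<sigma> UNIV \<le> M * rs powr \<alpha>"
  interpret finite_measure \<sigma> by (rule fin)
  define P where "P = measure \<sigma> UNIV"
  have sp: "space \<sigma> = UNIV" using sets_eq_imp_space_eq[OF sets] by simp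
  have emP: "emeasure \<sigma> (space \<sigma>) = ennreal P" unfolding P_def sp by (simp add: emeasure_eq_measure)
  show "Hm12_norm_sq \<sigma> \<le> ennreal (\<alpha> / (\<alpha> - 1) * M powr (1 / \<alpha>) * measure \<sigma> UNIV powr (2 - 1 / \<alpha>))"
  proof (cases "P = 0")
    case True
    have "space \<sigma> \<in> null_sets \<sigma>" using emP True by (simp add: null_sets_def)
    then have "AE x in \<sigma>. False" by (rule AE_I') auto
    then have "Hm12_norm_sq \<sigma> = (\<integral>\<^sup>+ x. 0 \<partial>\<sigma>)"
      unfolding Hm12_norm_sq_def by (intro nn_integral_cong_AE) auto
    then show ?thesis by simp
  next
    case False
    then have P: "P > 0" unfolding P_def by (simp add: less_le)
    define t0 where "t0 = (M/P) powr (1/\<alpha>)"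
    have t0p: "t0 > 0" unfolding t0_def using M P by simp
    have "1 / t0 = (P/M) powr (1/\<alpha>)" unfolding t0_def by (simp add: powr_divide)
    also have "\<dots> \<le> (rs powr \<alpha>) powr (1/\<alpha>)"
      by (rule powr_mono2) (use assms M P bd in \<open>auto simp: P_def pos_divide_le_eq mult.commute\<close>)
    also have "\<dots> = rs" using assms rs by (simp add: powr_powr)
    finally have t0r: "1 / t0 \<le> rs" .
    define K where "K = P * t0 + M * (t0 powr (1 - \<alpha>) / (\<alpha> - 1))"
    have K: "K = \<alpha> / (\<alpha> - 1) * M powr (1/\<alpha>) * P powr (1 - 1/\<alpha>)"
      unfolding K_def by (rule arith_id[OF assms M P t0_def])
    have "Hm12_norm_sq \<sigma> \<le> (\<integral>\<^sup>+ x. ennreal K \<partial>\<sigma>)"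
      unfolding Hm12_norm_sq_def
    proof (rule nn_integral_mono_AE)
      show "AE x in \<sigma>. (\<integral>\<^sup>+ y. riesz_kernel x y \<partial>\<sigma>) \<le> ennreal K"
        using supp_AE[OF sets]
      proof (rule AE_mp, intro AE_I2 impI)
        fix x assume "x \<in> msupp \<sigma>"
        then show "(\<integral>\<^sup>+ y. riesz_kernel x y \<partial>\<sigma>) \<le> ennreal K"
          unfolding K_def P_def by (rule inner_bound[OF sets fin assms M ahl _ t0p t0r])
      qed
    qed
    also have "\<dots> = ennreal K * ennreal P" using emP by simp
    also have "\<dots> = ennreal (K * P)"
    proof -
      have K0: "K \<ge> 0" unfolding K using assms M P by simp
      show ?thesis by (rule ennreal_mult[symmetric]) (use K0 P in auto)
    qed
    also have "K * P = \<alpha> / (\<alpha> - 1) * M powr (1 / \<alpha>) * P powr (2 - 1 / \<alpha>)"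
    proof -
      have "P powr (1 - 1/\<alpha>) * P = P powr (2 - 1/\<alpha>)"
        using powr_add[of P "1 - 1/\<alpha>" 1] P by simp
      then show ?thesis unfolding K by (simp add: mult.assoc)
    qed
    finally show ?thesis unfolding P_def .
  qed
qed

end
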